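(* Let $G$ be an esp-digraph. Then $\chi_o(G)\le 7$.
   Context: An oriented graph is a digraph without loops and without pairs of opposite arcs. For a digraph $G=(V,E)$ (parallel arcs allowed; the definitions apply verbatim), an oriented $r$-vertex-coloring is a map $c:V\to\{1,\dots,r\}$ such that (i) $c(u)\ne c(v)$ for every arc $(u,v)\in E$, and (ii) $c(u)\ne c(y)$ for every two arcs $(u,v),(x,y)\in E$ with $c(v)=c(x)$. Equivalently, $c$ is a homomorphism to an oriented graph on $r$ vertices. The oriented chromatic number $\chi_o(G)$ is the smallest $r$ for which such a coloring exists. Edge series-parallel (multi)digraphs (esp-digraphs) are defined recursively, each with a distinguished source and sink: (i) a digraph with two distinct vertices $u,v$ and the single arc $(u,v)$ is an esp-digraph with source $u$ and sink $v$; (ii) if $G_1,G_2$ are vertex-disjoint esp-digraphs, then the parallel composition $G_1\cup G_2$ (identify the source of $G_1$ with the source of $G_2$ and the sink of $G_1$ with the sink of $G_2$; arcs are united, possibly creating parallel arcs) is an esp-digraph with these identified source and sink, and the series composition $G_1\times G_2$ (identify the sink of $G_1$ with the source of $G_2$) is an esp-digraph with source the source of $G_1$ and sink the sink of $G_2$. *)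

theory Defs
  imports Main "HOL-Library.Multiset"
begin

definition oriented_coloring ::
  "'a set \<Rightarrow> ('a \<times> 'a) multiset \<Rightarrow> nat \<Rightarrow> ('a \<Rightarrow> nat) \<Rightarrow> bool" where
  "oriented_coloring V E r c \<longleftrightarrow>
     (\<forall>v\<in>V. c v \<in> {1..r}) \<and>
     (\<forall>(u,v)\<in>set_mset E. c u \<noteq> c v) \<and>
     (\<forall>(u,v)\<in>set_mset E. \<forall>(x,y)\<in>set_mset E. c v = c x \<longrightarrow> c u \<noteq> c y)"

definition oriented_chromatic_number :: "'a set \<Rightarrow> ('a \<times> 'a) multiset \<Rightarrow> nat" where
  "oriented_chromatic_number V E = (LEAST r. \<exists>c. oriented_coloring V E r c)"

text \<open>Edge series-parallel digraphs (V, E, source, sink); the identification of vertices in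
  the compositions is modelled by requiring the two parts to share exactly the identified
  vertices (so the result is the composition up to isomorphism).\<close>

inductive esp :: "'a set \<Rightarrow> ('a \<times> 'a) multiset \<Rightarrow> 'a \<Rightarrow> 'a \<Rightarrow> bool" where
  arc: "u \<noteq> v \<Longrightarrow> esp {u, v} {#(u, v)#} u v"
| par: "esp V1 E1 s t \<Longrightarrow> esp V2 E2 s t \<Longrightarrow> V1 \<inter> V2 = {s, t} \<Longrightarrow>
        esp (V1 \<union> V2) (E1 + E2) s t"
| ser: "esp V1 E1 s m \<Longrightarrow> esp V2 E2 m t \<Longrightarrow> V1 \<inter> V2 = {m} \<Longrightarrow>
        esp (V1 \<union> V2) (E1 + E2) s t"

end

theory Submission
  imports Defs
begin

definition T7 :: "(nat \<times> nat) set" where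
  "T7 = {(x,y). x \<in> {1..7} \<and> y \<in> {1..7} \<and> (y + 7 - x) mod 7 \<in> {1,2,4}}"

lemma range7: "x \<in> {1..7::nat} \<Longrightarrow> x = 1 \<or> x = 2 \<or> x = 3 \<or> x = 4 \<or> x = 5 \<or> x = 6 \<or> x = 7"
  by auto

lemma T7_irrefl: "(x,y) \<in> T7 \<Longrightarrow> x \<noteq> y"
  unfolding T7_def by auto

lemma T7_anti: "(x,y) \<in> T7 \<Longrightarrow> (y,x) \<notin> T7"
proof
  assume a: "(x,y) \<in> T7" "(y,x) \<in> T7"
  then have "x \<in> {1..7}" "y \<in> {1..7}" unfolding T7_def by auto
  then show False using a unfolding T7_def
    by (elim range7[elim_format] disjE) auto
qed

lemma T7_split: "(a,b) \<in> T7 \<Longrightarrow> \<exists>w. (a,w) \<in> T7 \<and> (w,b) \<in> T7"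
proof -
  assume a: "(a,b) \<in> T7"
  define w where "w = ((a - 1) + 4 * ((b + 7 - a) mod 7)) mod 7 + 1"
  have "a \<in> {1..7}" "b \<in> {1..7}" "(b + 7 - a) mod 7 \<in> {1,2,4}" using a unfolding T7_def by auto
  then have "(a,w) \<in> T7 \<and> (w,b) \<in> T7" unfolding T7_def w_def
    by (elim range7[elim_format] disjE) simp_all
  then show ?thesis by blast
qed

lemma esp_basic: "esp V E s t \<Longrightarrow> s \<in> V \<and> t \<in> V \<and> s \<noteq> t \<and> (\<forall>(u,v)\<in>#E. u \<in> V \<and> v \<in> V)"
  by (induction rule: esp.induct) auto

lemma esp_hom: "esp V E s t \<Longrightarrow> (a,b) \<in> T7 \<Longrightarrow>
  \<exists>c. (\<forall>v\<in>V. c v \<in> {1..7}) \<and> (\<forall>(u,v)\<in>#E. (c u, c v) \<in> T7) \<and> c s = a \<and> c t = b"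
proof (induction arbitrary: a b rule: esp.induct)
  case (arc u v)
  then show ?case unfolding T7_def by (intro exI[of _ "\<lambda>x. if x = u then a else b"]) auto
next
  case (par V1 E1 s t V2 E2)
  obtain c1 where c1: "\<forall>v\<in>V1. c1 v \<in> {1..7}" "\<forall>(u,v)\<in>#E1. (c1 u, c1 v) \<in> T7" "c1 s = a" "c1 t = b"
    using par.IH(1)[OF par.prems] by blast
  obtain c2 where c2: "\<forall>v\<in>V2. c2 v \<in> {1..7}" "\<forall>(u,v)\<in>#E2. (c2 u, c2 v) \<in> T7" "c2 s = a" "c2 t = b"
    using par.IH(2)[OF par.prems] by blast
  have b1: "\<forall>(u,v)\<in>#E1. u \<in> V1 \<and> v \<in> V1" "s \<in> V1" "t \<in> V1" using esp_basic[OF par.hyps(1)] by auto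
  have b2: "\<forall>(u,v)\<in>#E2. u \<in> V2 \<and> v \<in> V2" using esp_basic[OF par.hyps(2)] by auto
  define c where "c = (\<lambda>x. if x \<in> V1 then c1 x else c2 x)"
  have agree: "x \<in> V2 \<Longrightarrow> c x = c2 x" for x
  proof (cases "x \<in> V1")
    case True
    assume "x \<in> V2"
    with True have "x \<in> V1 \<inter> V2" by blast
    then show ?thesis using par.hyps(3) c1(3,4) c2(3,4) unfolding c_def by auto
  qed (simp add: c_def)
  show ?case
  proof (intro exI[of _ c] conjI)
    show "\<forall>v\<in>V1 \<union> V2. c v \<in> {1..7}" using c1 c2 agree unfolding c_def by auto
    show "\<forall>(u,v)\<in>#E1 + E2. (c u, c v) \<in> T7"
    proof (clarsimp)
      fix u v assume "(u,v) \<in># E1 \<or> (u,v) \<in># E2"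
      then show "(c u, c v) \<in> T7"
      proof
        assume "(u,v) \<in># E1" then show ?thesis using c1 b1 unfolding c_def by auto
      next
        assume "(u,v) \<in># E2" then show ?thesis using c2 b2 agree by fastforce
      qed
    qed
    show "c s = a" "c t = b" using c1 b1 unfolding c_def by auto
  qed
next
  case (ser V1 E1 s m V2 E2 t)
  obtain w where w: "(a,w) \<in> T7" "(w,b) \<in> T7" using T7_split[OF ser.prems] by blast
  obtain c1 where c1: "\<forall>v\<in>V1. c1 v \<in> {1..7}" "\<forall>(u,v)\<in>#E1. (c1 u, c1 v) \<in> T7" "c1 s = a" "c1 m = w"
    using ser.IH(1)[OF w(1)] by blast
  obtain c2 where c2: "\<forall>v\<in>V2. c2 v \<in> {1..7}" "\<forall>(u,v)\<in>#E2. (c2 u, c2 v) \<in> T7" "c2 m = w" "c2 t = b"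
    using ser.IH(2)[OF w(2)] by blast
  have b1: "\<forall>(u,v)\<in>#E1. u \<in> V1 \<and> v \<in> V1" "s \<in> V1" using esp_basic[OF ser.hyps(1)] by auto
  have b2: "\<forall>(u,v)\<in>#E2. u \<in> V2 \<and> v \<in> V2" "t \<in> V2" "m \<noteq> t" using esp_basic[OF ser.hyps(2)] by auto
  define c where "c = (\<lambda>x. if x \<in> V1 then c1 x else c2 x)"
  have agree: "x \<in> V2 \<Longrightarrow> c x = c2 x" for x
  proof (cases "x \<in> V1")
    case True
    assume "x \<in> V2"
    with True have "x \<in> V1 \<inter> V2" by blast
    then show ?thesis using ser.hyps(3) c1(3,4) c2(3,4) unfolding c_def by auto
  qed (simp add: c_def)
  show ?case
  proof (intro exI[of _ c] conjI)
    show "\<forall>v\<in>V1 \<union> V2. c v \<in> {1..7}" using c1 c2 agree unfolding c_def by auto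
    show "\<forall>(u,v)\<in>#E1 + E2. (c u, c v) \<in> T7"
    proof (clarsimp)
      fix u v assume "(u,v) \<in># E1 \<or> (u,v) \<in># E2"
      then show "(c u, c v) \<in> T7"
      proof
        assume "(u,v) \<in># E1" then show ?thesis using c1 b1 unfolding c_def by auto
      next
        assume "(u,v) \<in># E2" then show ?thesis using c2 b2 agree by fastforce
      qed
    qed
    show "c s = a" using c1 b1 unfolding c_def by auto
    show "c t = b" using c2 b2 agree by auto
  qed
qed

theorem theorem3:
  fixes V :: "'a set" and E :: "('a \<times> 'a) multiset" and s t :: 'a
  assumes "esp V E s t"
  shows "oriented_chromatic_number V E \<le> 7"
proof -
  have "(1,2) \<in> T7" unfolding T7_def by auto
  then obtain c where c: "\<forall>v\<in>V. c v \<in> {1..7}" "\<forall>(u,v)\<in>#E. (c u, c v) \<in> T7"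
    using esp_hom[OF assms] by blast
  have "oriented_coloring V E 7 c"
    unfolding oriented_coloring_def
  proof (intro conjI)
    show "\<forall>v\<in>V. c v \<in> {1..7}" using c(1) .
    show "\<forall>(u,v)\<in>#E. c u \<noteq> c v" using c(2) T7_irrefl by fastforce
    show "\<forall>(u,v)\<in>#E. \<forall>(x,y)\<in>#E. c v = c x \<longrightarrow> c u \<noteq> c y"
      using c(2) T7_anti by fastforce
  qed
  then show ?thesis unfolding oriented_chromatic_number_def by (intro Least_le) blast
qed

end
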